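(* For an affine lattice ${\mathcal L}\subset\mathbb{R}^n$ write ${\mathcal L}_0={\mathcal L}-{\mathcal L}$ for the lattice of which it is a translate. Let $g\in G$. Then $(\mathbb{Z}^ng)_0\cap(\{{\bf 0}\}\times\mathbb{R}^m)\subset(\mathbb{Z}^nhg)_0\cap(\{{\bf 0}\}\times\mathbb{R}^m)$ for all $h\in H_g$, and these two sets are equal for almost all $h\in H_g$ (with respect to Haar measure on $H_g$).
   Context: $n=d+m$, $\mathbb{R}^n=\mathbb{R}^d\times\mathbb{R}^m$. $G=\operatorname{ASL}(n,\mathbb{R})$ with $(M,{\boldsymbol\xi})(M',{\boldsymbol\xi}')=(MM',{\boldsymbol\xi}M'+{\boldsymbol\xi}')$, acting on row vectors by ${\boldsymbol y}\mapsto{\boldsymbol y}M+{\boldsymbol\xi}$; $\Gamma=\operatorname{ASL}(n,\mathbb{Z})$. $\varphi_g(A,{\boldsymbol x})=g\bigl(\operatorname{diag}(A,1_m),({\boldsymbol x},{\bf 0})\bigr)g^{-1}$ for $(A,{\boldsymbol x})\in\operatorname{ASL}(d,\mathbb{R})$. $H_g$ is the unique closed connected subgroup of $G$ such that $\Gamma\cap H_g$ is a lattice in $H_g$, $\varphi_g(\operatorname{SL}(d,\mathbb{R}))\subset H_g$, and the closure of $\Gamma\backslash\Gamma\varphi_g(\operatorname{SL}(d,\mathbb{R}))$ in $\Gamma\backslash G$ is $\Gamma\backslash\Gamma H_g$. *)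

theory Defs
  imports "HOL-Analysis.Analysis"
begin

text \<open>Elements of ASL(n,R) are pairs (M, xi) of an n x n real matrix and a row vector.
  The index type 'n of R^n is arbitrary finite; in the statement it is 'd + 'm,
  so that R^n = R^d x R^m (Inl-coordinates = R^d part, Inr-coordinates = R^m part).\<close>

type_synonym 'n asl = "(real^'n^'n) \<times> (real^'n)"

definition asl_mult :: "'n::finite asl \<Rightarrow> 'n asl \<Rightarrow> 'n asl" where
  "asl_mult g g' = (fst g ** fst g', (snd g v* fst g') + snd g')"

definition asl_one :: "'n::finite asl" where
  "asl_one = (mat 1, 0)"

definition asl_inv :: "'n::finite asl \<Rightarrow> 'n asl" where
  "asl_inv g = (matrix_inv (fst g), - (snd g v* matrix_inv (fst g)))"

definition asl_act :: "real^'n \<Rightarrow> 'n::finite asl \<Rightarrow> real^'n" where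
  "asl_act y g = (y v* fst g) + snd g"

definition ASL_R :: "'n::finite asl set" where
  "ASL_R = {g. det (fst g) = 1}"

definition ASL_Z :: "'n::finite asl set" where
  "ASL_Z = {g \<in> ASL_R. (\<forall>i j. fst g $ i $ j \<in> \<int>) \<and> (\<forall>i. snd g $ i \<in> \<int>)}"

definition int_vecs :: "(real^'n::finite) set" where
  "int_vecs = {k. \<forall>i. k $ i \<in> \<int>}"

definition lattice_orbit :: "'n::finite asl \<Rightarrow> (real^'n) set" where
  "lattice_orbit g = (\<lambda>k. asl_act k g) ` int_vecs"

definition diff_set :: "(real^'n::finite) set \<Rightarrow> (real^'n) set" where
  "diff_set L = {a - b | a b. a \<in> L \<and> b \<in> L}"

definition zero_first :: "(real^('d::finite + 'm::finite)) set" where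
  "zero_first = {y. \<forall>a. y $ Inl a = 0}"

definition embed_block :: "real^'d^'d \<Rightarrow> real^'d \<Rightarrow> ('d::finite + 'm::finite) asl" where
  "embed_block A x =
     ((\<chi> i j. case (i, j) of
         (Inl a, Inl b) \<Rightarrow> A $ a $ b
       | (Inr a, Inr b) \<Rightarrow> (if a = b then 1 else 0)
       | _ \<Rightarrow> 0),
      (\<chi> i. case i of Inl a \<Rightarrow> x $ a | Inr _ \<Rightarrow> 0))"

definition phi :: "('d::finite + 'm::finite) asl \<Rightarrow> real^'d^'d \<Rightarrow> real^'d \<Rightarrow> ('d + 'm) asl" where
  "phi g A x = asl_mult (asl_mult g (embed_block A x)) (asl_inv g)"

definition SL_image :: "('d::finite + 'm::finite) asl \<Rightarrow> ('d + 'm) asl set" where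
  "SL_image g = {phi g A 0 | A. det A = 1}"

definition asl_subgroup :: "'n::finite asl set \<Rightarrow> bool" where
  "asl_subgroup H \<longleftrightarrow> H \<subseteq> ASL_R \<and> asl_one \<in> H \<and>
     (\<forall>a\<in>H. \<forall>b\<in>H. asl_mult a b \<in> H) \<and> (\<forall>a\<in>H. asl_inv a \<in> H)"

definition set_prod :: "'n::finite asl set \<Rightarrow> 'n asl set \<Rightarrow> 'n asl set" where
  "set_prod A B = {asl_mult a b | a b. a \<in> A \<and> b \<in> B}"

definition haar_measure :: "'n::finite asl set \<Rightarrow> 'n asl measure \<Rightarrow> bool" where
  "haar_measure H \<mu> \<longleftrightarrow>
     sets \<mu> = sets (restrict_space borel H) \<and>
     (\<forall>h\<in>H. \<forall>A\<in>sets \<mu>. emeasure \<mu> ((\<lambda>x. asl_mult h x) ` A) = emeasure \<mu> A) \<and>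
     (\<forall>K. K \<subseteq> H \<and> compact K \<longrightarrow> emeasure \<mu> K < \<infinity>) \<and>
     (\<forall>U. openin (top_of_set H) U \<and> U \<noteq> {} \<longrightarrow> emeasure \<mu> U > 0)"

definition lattice_in :: "'n::finite asl set \<Rightarrow> 'n asl set \<Rightarrow> bool" where
  "lattice_in \<Lambda> H \<longleftrightarrow> \<Lambda> \<subseteq> H \<and> asl_subgroup \<Lambda> \<and>
     (\<forall>\<gamma>\<in>\<Lambda>. \<exists>e>0. ball \<gamma> e \<inter> \<Lambda> = {\<gamma>}) \<and>
     (\<exists>\<mu> F. haar_measure H \<mu> \<and> F \<in> sets \<mu> \<and>
        (\<forall>h\<in>H. \<exists>!\<gamma>. \<gamma> \<in> \<Lambda> \<and> asl_mult \<gamma> h \<in> F) \<and> emeasure \<mu> F < \<infinity>)"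

text \<open>The closure condition in Gamma\G is expressed
  upstairs in G: the preimage of the closure of a set under the (open) quotient map
  equals the closure of the preimage.\<close>
definition is_Hg :: "('d::finite + 'm::finite) asl \<Rightarrow> ('d + 'm) asl set \<Rightarrow> bool" where
  "is_Hg g H \<longleftrightarrow> asl_subgroup H \<and> closed H \<and> connected H \<and>
     lattice_in (ASL_Z \<inter> H) H \<and> SL_image g \<subseteq> H \<and>
     closure (set_prod ASL_Z (SL_image g)) = set_prod ASL_Z H"

end

theory Submission
  imports Defs
begin


lemma minv:
  fixes A :: "real^'n::finite^'n"
  assumes "det A \<noteq> 0"
  shows "A ** matrix_inv A = mat 1" "matrix_inv A ** A = mat 1"
proof -
  have "invertible A" using assms invertible_det_nz by blast
  then have "\<exists>A'. A ** A' = mat 1 \<and> A' ** A = mat 1" unfolding invertible_def by blast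
  then have "A ** matrix_inv A = mat 1 \<and> matrix_inv A ** A = mat 1"
    unfolding matrix_inv_def by (rule someI_ex)
  then show "A ** matrix_inv A = mat 1" "matrix_inv A ** A = mat 1" by auto
qed

lemma det_minv:
  fixes A :: "real^'n::finite^'n"
  assumes "det A = 1" shows "det (matrix_inv A) = 1"
  using det_mul[of A "matrix_inv A"] minv[of A] assms by simp

lemma fst_mult[simp]: "fst (asl_mult a b) = fst a ** fst b"
  by (simp add: asl_mult_def)
lemma snd_mult[simp]: "snd (asl_mult a b) = snd a v* fst b + snd b"
  by (simp add: asl_mult_def)
lemma fst_inv[simp]: "fst (asl_inv a) = matrix_inv (fst a)"
  by (simp add: asl_inv_def)
lemma fst_one[simp]: "fst (asl_one::'n::finite asl) = mat 1"
  by (simp add: asl_one_def)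

lemma mult_one_left[simp]: "asl_mult asl_one h = (h::'n::finite asl)"
  by (simp add: asl_mult_def asl_one_def)

lemma vm_neg: "(- u) v* B = - (u v* (B::real^'n::finite^'m::finite))"
  by (simp add: vector_matrix_mult_def vec_eq_iff sum_negf)

lemma mult_inv_cancel:
  fixes x y :: "'n::finite asl"
  assumes "det (fst x) \<noteq> 0"
  shows "asl_mult x (asl_mult (asl_inv x) y) = y"
proof -
  have "fst x ** (matrix_inv (fst x) ** fst y) = fst y"
    by (simp add: matrix_mul_assoc minv[OF assms])
  moreover have "snd x v* (matrix_inv (fst x) ** fst y) +
      ((- (snd x v* matrix_inv (fst x))) v* fst y + snd y) = snd y"
  proof -
    have "(- (snd x v* matrix_inv (fst x))) v* fst y = - (snd x v* (matrix_inv (fst x) ** fst y))"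
      by (simp add: vm_neg vector_matrix_mul_assoc)
    then show ?thesis by simp
  qed
  ultimately show ?thesis by (simp add: asl_mult_def asl_inv_def prod_eq_iff)
qed

lemma subgroupD:
  assumes "asl_subgroup H"
  shows "asl_one \<in> H" "\<And>a b. a \<in> H \<Longrightarrow> b \<in> H \<Longrightarrow> asl_mult a b \<in> H"
    "\<And>a. a \<in> H \<Longrightarrow> asl_inv a \<in> H" "\<And>a. a \<in> H \<Longrightarrow> det (fst a) = 1"
  using assms unfolding asl_subgroup_def ASL_R_def by auto

lemma int_vecs_diff: "a \<in> int_vecs \<Longrightarrow> b \<in> int_vecs \<Longrightarrow> a - b \<in> int_vecs"
  by (auto simp: int_vecs_def)
lemma int_vecs_0: "0 \<in> int_vecs"
  by (auto simp: int_vecs_def)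

lemma diff_set_orbit:
  "diff_set (lattice_orbit g) = (\<lambda>k. k v* fst g) ` int_vecs"
proof
  show "diff_set (lattice_orbit g) \<subseteq> (\<lambda>k. k v* fst g) ` int_vecs"
  proof
    fix y assume "y \<in> diff_set (lattice_orbit g)"
    then obtain a b where "a \<in> int_vecs" "b \<in> int_vecs" "y = asl_act a g - asl_act b g"
      unfolding diff_set_def lattice_orbit_def by auto
    then show "y \<in> (\<lambda>k. k v* fst g) ` int_vecs"
      by (auto simp: asl_act_def vector_matrix_mult_diff_distrib intro!: image_eqI[of _ _ "a - b"] int_vecs_diff)
  qed
next
  show "(\<lambda>k. k v* fst g) ` int_vecs \<subseteq> diff_set (lattice_orbit g)"
  proof
    fix y assume "y \<in> (\<lambda>k. k v* fst g) ` int_vecs"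
    then obtain k where k: "k \<in> int_vecs" "y = k v* fst g" by auto
    have "y = asl_act k g - asl_act 0 g" using k by (simp add: asl_act_def)
    then show "y \<in> diff_set (lattice_orbit g)"
      unfolding diff_set_def lattice_orbit_def using k int_vecs_0 by blast
  qed
qed


lemma int_det:
  fixes A :: "real^'n::finite^'n"
  assumes "\<And>i j. A $ i $ j \<in> \<int>"
  shows "det A \<in> \<int>"
  unfolding det_def
  by (intro Ints_sum Ints_mult Ints_prod assms Ints_of_int)

lemma int_minv:
  fixes A :: "real^'n::finite^'n"
  assumes "\<And>i j. A $ i $ j \<in> \<int>" "det A = 1"
  shows "matrix_inv A $ i $ j \<in> \<int>"
proof -
  let ?x = "matrix_inv A *v axis j 1"
  have "A *v ?x = axis j 1"
    by (simp add: matrix_vector_mul_assoc minv assms)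
  then have "?x = (\<chi> k. det(\<chi> i l. if l=k then (axis j 1::real^'n)$i else A$i$l) / det A)"
    using cramer[of A ?x "axis j 1"] assms by simp
  then have "?x $ i = det(\<chi> a l. if l=i then (axis j 1::real^'n)$a else A$a$l)"
    using assms by simp
  also have "\<dots> \<in> \<int>"
    by (rule int_det) (simp add: axis_def assms)
  finally show ?thesis
    by (simp add: matrix_vector_mult_basis column_def)
qed


lemma D_fix:
  fixes v :: "real^('d::finite + 'm::finite)"
  assumes "v \<in> zero_first"
  shows "v v* fst (embed_block A x :: ('d+'m) asl) = v"
proof -
  have v0: "\<And>a. v $ Inl a = 0" using assms by (simp add: zero_first_def)
  have "\<And>i j. v $ i * fst (embed_block A x :: ('d+'m) asl) $ i $ j = (if i = j then v $ j else 0)"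
    by (auto simp: embed_block_def v0 split: sum.splits)
  then show ?thesis
    by (simp add: vector_matrix_mult_def vec_eq_iff)
qed

lemma set_prod_elem:
  fixes g :: "('d::finite + 'm::finite) asl"
  assumes "det (fst g) = 1" "x \<in> set_prod ASL_Z (SL_image g)" "k \<in> int_vecs"
    "k v* fst g \<in> zero_first"
  shows "\<exists>k'\<in>int_vecs. k' v* (fst x ** fst g) = k v* fst g"
proof -
  obtain \<gamma> A where x: "x = asl_mult \<gamma> (phi g A 0)" and \<gamma>: "\<gamma> \<in> ASL_Z"
    using assms(2) unfolding set_prod_def SL_image_def by auto
  let ?M = "fst g" and ?D = "fst (embed_block A 0 :: ('d+'m) asl)" and ?G = "fst \<gamma>"
  have gi: "\<And>i j. ?G $ i $ j \<in> \<int>" "det ?G = 1" using \<gamma> unfolding ASL_Z_def ASL_R_def by auto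
  have "fst x ** ?M = ?G ** (((?M ** ?D) ** matrix_inv ?M) ** ?M)"
    by (simp add: x phi_def matrix_mul_assoc)
  also have "\<dots> = ?G ** (?M ** ?D)"
    by (simp add: matrix_mul_assoc[symmetric] minv assms(1))
  finally have e: "fst x ** ?M = ?G ** (?M ** ?D)" .
  let ?k = "k v* matrix_inv ?G"
  have "?k \<in> int_vecs"
    using assms(3) int_minv[OF gi] unfolding int_vecs_def
    by (auto simp: vector_matrix_mult_def intro!: Ints_sum Ints_mult)
  moreover have "?k v* (fst x ** ?M) = k v* ?M"
  proof -
    have "?k v* (fst x ** ?M) = ((k v* (matrix_inv ?G ** ?G)) v* ?M) v* ?D"
      by (simp add: e vector_matrix_mul_assoc matrix_mul_assoc)
    also have "\<dots> = (k v* ?M) v* ?D" by (simp add: minv gi)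
    also have "\<dots> = k v* ?M" by (rule D_fix[OF assms(4)])
    finally show ?thesis .
  qed
  ultimately show ?thesis by blast
qed

lemma closed_int_vecs: "closed (int_vecs :: (real^'n::finite) set)"
proof -
  have "int_vecs = (\<Inter>i. {k::real^'n. k $ i \<in> \<int>})" by (auto simp: int_vecs_def)
  moreover have "closed {k::real^'n. k $ i \<in> \<int>}" for i
    by (intro closed_vimage[of "\<int>" "\<lambda>k. k $ i", unfolded vimage_def] closed_Ints continuous_intros)
  ultimately show ?thesis by (metis closed_INT)
qed

lemma tendsto_det[tendsto_intros]:
  fixes f :: "'a \<Rightarrow> real^'n::finite^'n"
  assumes "(f \<longlongrightarrow> A) F"
  shows "((\<lambda>x. det (f x)) \<longlongrightarrow> det A) F"
  unfolding det_def
  by (intro tendsto_intros assms)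

lemma tendsto_mmult_right:
  fixes f :: "'a \<Rightarrow> real^'n::finite^'n"
  assumes "(f \<longlongrightarrow> A) F"
  shows "((\<lambda>x. f x ** M) \<longlongrightarrow> A ** M) F"
  unfolding matrix_matrix_mult_def
  by (intro tendsto_intros assms)


lemma one_ASL_Z: "asl_one \<in> ASL_Z"
  by (auto simp: ASL_Z_def ASL_R_def asl_one_def mat_def simp del: det_I) (metis det_I mat_def)

lemma part1:
  fixes g :: "('d::finite + 'm::finite) asl"
  assumes g: "g \<in> ASL_R" and Hg: "is_Hg g H" and h: "h \<in> H"
    and k: "k \<in> int_vecs" and kz: "k v* fst g \<in> zero_first"
  shows "\<exists>k'\<in>int_vecs. k' v* (fst h ** fst g) = k v* fst g"
proof -
  let ?M = "fst g" and ?v = "k v* fst g"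
  have dM: "det ?M = 1" using g by (simp add: ASL_R_def)
  have sg: "asl_subgroup H" using Hg by (simp add: is_Hg_def)
  have dh: "det (fst h) = 1" using subgroupD(4)[OF sg h] .
  have "h \<in> set_prod ASL_Z H"
  proof -
    have "h = asl_mult asl_one h" by simp
    then show ?thesis unfolding set_prod_def using one_ASL_Z h by blast
  qed
  then have "h \<in> closure (set_prod ASL_Z (SL_image g))"
    using Hg by (simp add: is_Hg_def)
  then obtain x where xS: "\<And>n. x n \<in> set_prod ASL_Z (SL_image g)" and xl: "x \<longlonglongrightarrow> h"
    unfolding closure_sequential by blast
  define A where "A n = fst (x n) ** ?M" for n
  define Ai where "Ai = fst h ** ?M"
  define cr where "cr B = (\<chi> j. det(\<chi> i l. if l = j then ?v $ i else transpose B $ i $ l) / det (transpose B))"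
    for B :: "real^('d+'m)^('d+'m)"
  have Al: "A \<longlonglongrightarrow> Ai"
    unfolding A_def Ai_def by (intro tendsto_mmult_right tendsto_fst xl)
  have dAi: "det Ai = 1" using dM dh by (simp add: Ai_def det_mul)
  have crl: "(\<lambda>n. cr (A n)) \<longlonglongrightarrow> cr Ai"
  proof -
    have At: "(\<lambda>n. transpose (A n)) \<longlonglongrightarrow> transpose Ai"
      unfolding transpose_def by (intro tendsto_intros Al)
    have "(\<lambda>n. (\<chi> i l. if l = j then ?v $ i else transpose (A n) $ i $ l) :: real^('d+'m)^('d+'m))
       \<longlonglongrightarrow> (\<chi> i l. if l = j then ?v $ i else transpose Ai $ i $ l)" for j
    proof -
      have Att: "\<And>i l. (\<lambda>n. transpose (A n) $ i $ l) \<longlonglongrightarrow> transpose Ai $ i $ l"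
        by (intro tendsto_vec_nth At)
      show ?thesis by (intro tendsto_vec_lambda) (auto intro: Att)
    qed
    note X = tendsto_divide[OF tendsto_det[OF this] tendsto_det[OF At]]
    show ?thesis
      unfolding cr_def using dAi
      by (intro tendsto_vec_lambda X) auto
  qed
  have ev: "eventually (\<lambda>n. det (A n) \<noteq> 0) sequentially"
    using tendsto_imp_eventually_ne[OF tendsto_det[OF Al]] dAi by simp
  have "eventually (\<lambda>n. cr (A n) \<in> int_vecs) sequentially"
    using ev
  proof (rule eventually_mono)
    fix n assume d: "det (A n) \<noteq> 0"
    obtain k' where k': "k' \<in> int_vecs" "k' v* A n = ?v"
      using set_prod_elem[OF dM xS k kz] unfolding A_def by blast
    have "transpose (A n) *v k' = ?v" using k' by simp
    then have "k' = cr (A n)"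
      unfolding cr_def using cramer[of "transpose (A n)" k' ?v] d by simp
    then show "cr (A n) \<in> int_vecs" using k' by simp
  qed
  then have ci: "cr Ai \<in> int_vecs"
    by (rule Lim_in_closed_set[OF closed_int_vecs _ _ crl]) simp
  have "transpose Ai *v cr Ai = ?v"
    unfolding cr_def using cramer[of "transpose Ai" "cr Ai" ?v] dAi by (simp add: cr_def)
  then have "cr Ai v* Ai = ?v" by simp
  then show ?thesis using ci unfolding Ai_def by blast
qed




definition Zs :: "'n::finite asl set \<Rightarrow> real^'n \<Rightarrow> (real^'n) set \<Rightarrow> 'n asl set" where
  "Zs H c W = {h \<in> H. fst h *v c \<in> W}"

definition fW :: "'n::finite asl \<Rightarrow> (real^'n) set \<Rightarrow> (real^'n) set" where
  "fW x W = (\<lambda>w. fst x *v w) ` W"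

lemma mult_inv_cancel2:
  fixes x y :: "'n::finite asl"
  assumes "det (fst x) \<noteq> 0"
  shows "asl_mult (asl_inv x) (asl_mult x y) = y"
proof -
  have "matrix_inv (fst x) ** (fst x ** fst y) = fst y"
    by (simp add: matrix_mul_assoc minv[OF assms])
  moreover have "(- (snd x v* matrix_inv (fst x))) v* (fst x ** fst y) +
      (snd x v* fst y + snd y) = snd y"
  proof -
    have "(- (snd x v* matrix_inv (fst x))) v* (fst x ** fst y) = - (snd x v* fst y)"
      by (simp add: vm_neg vector_matrix_mul_assoc matrix_mul_assoc minv[OF assms])
    then show ?thesis by simp
  qed
  ultimately show ?thesis by (simp add: asl_mult_def asl_inv_def prod_eq_iff)
qed

lemma space_haar: "haar_measure H \<mu> \<Longrightarrow> space \<mu> = H"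
  unfolding haar_measure_def
  by (metis sets_eq_imp_space_eq space_borel space_restrict_space Int_UNIV_right)

lemma sets_haar_closed:
  assumes "haar_measure H \<mu>" "closed S"
  shows "H \<inter> S \<in> sets \<mu>"
  using assms unfolding haar_measure_def sets_restrict_space
  by (auto intro: borel_closed)

lemma closed_Zs_aux:
  fixes c :: "real^'n::finite"
  assumes "closed W"
  shows "closed {h :: 'n asl. fst h *v c \<in> W}"
proof -
  have "continuous_on UNIV (\<lambda>h :: 'n asl. fst h *v c)"
    unfolding matrix_vector_mult_def by (intro continuous_intros)
  then show ?thesis
    using closed_vimage[OF assms] by (simp add: vimage_def)
qed

lemma Zs_sets:
  assumes "haar_measure H \<mu>" "subspace W"
  shows "Zs H c W \<in> sets \<mu>"
proof -
  have "Zs H c W = H \<inter> {h. fst h *v c \<in> W}" by (auto simp: Zs_def)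
  then show ?thesis
    using sets_haar_closed[OF assms(1) closed_Zs_aux[OF closed_subspace[OF assms(2)]]] by simp
qed

lemma Zs_translate:
  assumes sg: "asl_subgroup H" and x: "x \<in> H"
  shows "(\<lambda>h. asl_mult x h) ` Zs H c W = Zs H c (fW x W)"
proof
  show "(\<lambda>h. asl_mult x h) ` Zs H c W \<subseteq> Zs H c (fW x W)"
  proof
    fix y assume "y \<in> (\<lambda>h. asl_mult x h) ` Zs H c W"
    then obtain h where h: "h \<in> H" "fst h *v c \<in> W" "y = asl_mult x h" by (auto simp: Zs_def)
    have "fst y *v c = fst x *v (fst h *v c)" by (simp add: h matrix_vector_mul_assoc)
    then show "y \<in> Zs H c (fW x W)" using h subgroupD(2)[OF sg x] by (auto simp: Zs_def fW_def)
  qed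
next
  show "Zs H c (fW x W) \<subseteq> (\<lambda>h. asl_mult x h) ` Zs H c W"
  proof
    fix h' assume "h' \<in> Zs H c (fW x W)"
    then obtain w where h': "h' \<in> H" "w \<in> W" "fst h' *v c = fst x *v w"
      by (auto simp: Zs_def fW_def)
    have dx: "det (fst x) \<noteq> 0" using subgroupD(4)[OF sg x] by simp
    let ?h = "asl_mult (asl_inv x) h'"
    have hH: "?h \<in> H" using subgroupD[OF sg] x h' by blast
    have "fst ?h *v c = w"
      by (simp add: matrix_vector_mul_assoc[symmetric] h'(3) matrix_vector_mul_assoc minv[OF dx])
    then have "?h \<in> Zs H c W" using hH h' by (simp add: Zs_def)
    moreover have "asl_mult x ?h = h'" by (rule mult_inv_cancel[OF dx])
    ultimately show "h' \<in> (\<lambda>h. asl_mult x h) ` Zs H c W" by force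
  qed
qed

lemma fW_fW: "fW x (fW y W) = fW (asl_mult x y) W"
  by (auto simp: fW_def image_image matrix_vector_mul_assoc)

lemma fW_one: "fW asl_one W = W"
  by (simp add: fW_def)

lemma fW_subspace: "subspace W \<Longrightarrow> subspace (fW x W)"
  unfolding fW_def by (rule linear_subspace_image[OF matrix_vector_mul_linear])

lemma fW_dim:
  assumes "det (fst x) \<noteq> 0"
  shows "dim (fW x W) = dim W"
proof -
  have "inj ((*v) (fst x))"
    using assms inj_matrix_vector_mult invertible_det_nz by blast
  then show ?thesis
    unfolding fW_def
    by (intro dim_image_eq[OF matrix_vector_mul_linear]) (auto simp: inj_on_def inj_def)
qed

lemma Zs_Int: "Zs H c W \<inter> Zs H c W' = Zs H c (W \<inter> W')"
  by (auto simp: Zs_def)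

lemma cont_mult: "continuous_on UNIV (\<lambda>p :: 'n::finite asl \<times> 'n asl. asl_mult (fst p) (snd p))"
  unfolding asl_mult_def matrix_matrix_mult_def vector_matrix_mult_def
  by (intro continuous_intros)




lemma inter_null:
  assumes sg: "asl_subgroup H" and hm: "haar_measure H \<mu>"
    and sW: "subspace W" and cW: "c \<notin> W"
    and minW: "\<And>W'. subspace W' \<Longrightarrow> c \<notin> W' \<Longrightarrow> emeasure \<mu> (Zs H c W') \<noteq> 0 \<Longrightarrow> dim W \<le> dim W'"
    and x: "x \<in> H" and y: "y \<in> H" and ne: "fW x W \<noteq> fW y W"
  shows "emeasure \<mu> (Zs H c (fW x W) \<inter> Zs H c (fW y W)) = 0"
proof -
  let ?z = "asl_mult (asl_inv x) y"
  have dx: "det (fst x) \<noteq> 0" using subgroupD(4)[OF sg x] by simp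
  have zH: "?z \<in> H" using subgroupD[OF sg] x y by blast
  have dz: "det (fst ?z) \<noteq> 0" using subgroupD(4)[OF sg zH] by simp
  have xz: "asl_mult x ?z = y" by (rule mult_inv_cancel[OF dx])
  have fxz: "fW x (fW ?z W) = fW y W" by (simp add: fW_fW xz)
  have fz: "fW ?z W \<noteq> W" using ne fxz by auto
  have sI: "subspace (W \<inter> fW ?z W)" using sW fW_subspace[OF sW] by (rule subspace_inter)
  have dlt: "\<not> dim W \<le> dim (W \<inter> fW ?z W)"
  proof
    assume "dim W \<le> dim (W \<inter> fW ?z W)"
    then have "W \<inter> fW ?z W = W"
      using subspace_dim_equal[OF sI sW] by blast
    then have "W \<subseteq> fW ?z W" by blast
    moreover have "dim (fW ?z W) \<le> dim W" using fW_dim[OF dz] by simp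
    ultimately have "W = fW ?z W" using subspace_dim_equal[OF sW fW_subspace[OF sW]] by blast
    then show False using fz by simp
  qed
  have n0: "emeasure \<mu> (Zs H c (W \<inter> fW ?z W)) = 0"
    using minW[OF sI] cW dlt by blast
  have inj: "inj (\<lambda>h. asl_mult x h)"
    by (rule inj_on_inverseI[of _ "\<lambda>h. asl_mult (asl_inv x) h"]) (rule mult_inv_cancel2[OF dx])
  have "Zs H c (fW x W) \<inter> Zs H c (fW y W) =
      (\<lambda>h. asl_mult x h) ` Zs H c W \<inter> (\<lambda>h. asl_mult x h) ` Zs H c (fW ?z W)"
    using Zs_translate[OF sg x] fxz by simp
  also have "\<dots> = (\<lambda>h. asl_mult x h) ` (Zs H c (W \<inter> fW ?z W))"
    using image_Int[OF inj] Zs_Int by metis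
  finally have e: "Zs H c (fW x W) \<inter> Zs H c (fW y W) = (\<lambda>h. asl_mult x h) ` (Zs H c (W \<inter> fW ?z W))" .
  have "Zs H c (W \<inter> fW ?z W) \<in> sets \<mu>" using Zs_sets[OF hm sI] .
  then show ?thesis
    using hm x n0 unfolding e haar_measure_def by metis
qed


lemma haar_inv:
  assumes "haar_measure H \<mu>" "h \<in> H" "A \<in> sets \<mu>"
  shows "emeasure \<mu> ((\<lambda>x. asl_mult h x) ` A) = emeasure \<mu> A"
  using assms unfolding haar_measure_def by blast

lemma haar_finite:
  assumes hm: "haar_measure H \<mu>" and cl: "closed H"
  shows "H \<inter> cball x r \<in> sets \<mu>" "emeasure \<mu> (H \<inter> cball x r) < \<infinity>"
proof -
  show "H \<inter> cball x r \<in> sets \<mu>" by (rule sets_haar_closed[OF hm closed_cball])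
  have "compact (H \<inter> cball x r)" using closed_Int_compact[OF cl compact_cball] .
  then show "emeasure \<mu> (H \<inter> cball x r) < \<infinity>" using hm unfolding haar_measure_def by blast
qed

lemma finite_translates:
  assumes sg: "asl_subgroup H" and hm: "haar_measure H \<mu>" and cl: "closed H"
    and sW: "subspace W" and pW: "emeasure \<mu> (Zs H c W) \<noteq> 0"
    and disj: "\<And>x y. x \<in> H \<Longrightarrow> y \<in> H \<Longrightarrow> fW x W \<noteq> fW y W \<Longrightarrow>
        emeasure \<mu> (Zs H c (fW x W) \<inter> Zs H c (fW y W)) = 0"
    and x0: "x0 \<in> H"
  shows "finite ((\<lambda>x. fW x W) ` (H \<inter> cball x0 1))"
proof (rule ccontr)
  assume inf: "infinite ((\<lambda>x. fW x W) ` (H \<inter> cball x0 1))"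
  let ?K = "H \<inter> cball x0 1"
  have ZsS: "Zs H c W \<in> sets \<mu>" by (rule Zs_sets[OF hm sW])
  have "\<exists>R::nat. emeasure \<mu> (Zs H c W \<inter> cball 0 (real R)) \<noteq> 0"
  proof (rule ccontr)
    assume "\<not> ?thesis"
    then have z: "\<And>R::nat. emeasure \<mu> (Zs H c W \<inter> cball 0 (real R)) = 0" by blast
    have "Zs H c W = (\<Union>R::nat. Zs H c W \<inter> cball 0 (real R))"
    proof (intro equalityI subsetI)
      fix x assume "x \<in> Zs H c W"
      moreover obtain n :: nat where "norm x \<le> real n" using real_arch_simple by blast
      ultimately show "x \<in> (\<Union>R::nat. Zs H c W \<inter> cball 0 (real R))" by auto
    qed auto
    moreover have "range (\<lambda>R::nat. Zs H c W \<inter> cball 0 (real R)) \<subseteq> sets \<mu>"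
    proof -
      have "Zs H c W \<inter> cball 0 (real R) = Zs H c W \<inter> (H \<inter> cball 0 (real R))" for R
        by (auto simp: Zs_def)
      moreover have "Zs H c W \<inter> (H \<inter> cball 0 (real R)) \<in> sets \<mu>" for R
        using ZsS haar_finite(1)[OF hm cl, of 0 "real R"] by (rule sets.Int)
      ultimately show ?thesis by auto
    qed
    ultimately have "emeasure \<mu> (Zs H c W) = 0"
      using emeasure_UN_eq_0[of \<mu> "\<lambda>R::nat. Zs H c W \<inter> cball 0 (real R)"] z by simp
    then show False using pW by simp
  qed
  then obtain R :: nat where pA: "emeasure \<mu> (Zs H c W \<inter> cball 0 (real R)) \<noteq> 0" by blast
  define A where "A = Zs H c W \<inter> cball 0 (real R)"
  define B where "B = H \<inter> cball 0 (real R)"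
  have AB: "A \<subseteq> B" by (auto simp: A_def B_def Zs_def)
  have AS: "A \<in> sets \<mu>"
  proof -
    have "A = Zs H c W \<inter> B" by (auto simp: A_def B_def Zs_def)
    then show ?thesis using sets.Int[OF ZsS haar_finite(1)[OF hm cl, of 0 "real R"]] B_def by simp
  qed
  have Bfin: "emeasure \<mu> B < \<infinity>" unfolding B_def by (rule haar_finite(2)[OF hm cl])
  have Afin: "emeasure \<mu> A < \<infinity>"
  proof -
    have "B \<in> sets \<mu>" unfolding B_def by (rule haar_finite(1)[OF hm cl])
    then show ?thesis using emeasure_mono[OF AB] Bfin by (metis order.strict_trans1)
  qed
  have Apos: "emeasure \<mu> A \<noteq> 0" using pA A_def by simp
  have cK: "compact ?K" using closed_Int_compact[OF cl compact_cball] .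
  have cB: "compact B" unfolding B_def using closed_Int_compact[OF cl compact_cball] .
  have "compact ((\<lambda>p. asl_mult (fst p) (snd p)) ` (?K \<times> B))"
    by (rule compact_continuous_image[OF continuous_on_subset[OF cont_mult] compact_Times[OF cK cB]]) simp
  then have "bounded ((\<lambda>p. asl_mult (fst p) (snd p)) ` (?K \<times> B))" by (rule compact_imp_bounded)
  then obtain e z where Cb: "(\<lambda>p. asl_mult (fst p) (snd p)) ` (?K \<times> B) \<subseteq> cball z e"
    unfolding bounded_subset_cball by blast
  define Cs where "Cs = H \<inter> cball z e"
  have CsS: "Cs \<in> fmeasurable \<mu>"
    unfolding Cs_def using haar_finite[OF hm cl] by (intro fmeasurableI)
  define sel where "sel U = (SOME x. x \<in> ?K \<and> fW x W = U)" for U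
  have sel: "sel U \<in> ?K \<and> fW (sel U) W = U" if "U \<in> (\<lambda>x. fW x W) ` ?K" for U
  proof -
    have "\<exists>x. x \<in> ?K \<and> fW x W = U" using that by blast
    then show ?thesis unfolding sel_def by (rule someI_ex)
  qed
  define S where "S U = (\<lambda>h. asl_mult (sel U) h) ` A" for U
  have SU: "emeasure \<mu> (S U) = emeasure \<mu> A" if "U \<in> (\<lambda>x. fW x W) ` ?K" for U
    unfolding S_def by (rule haar_inv[OF hm _ AS]) (use sel[OF that] in blast)
  have Ssets: "S U \<in> sets \<mu>" if "U \<in> (\<lambda>x. fW x W) ` ?K" for U
  proof (rule ccontr)
    assume "S U \<notin> sets \<mu>"
    then have "emeasure \<mu> (S U) = 0" by (rule emeasure_notin_sets)
    then show False using SU[OF that] Apos by simp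
  qed
  have SCs: "S U \<subseteq> Cs" if "U \<in> (\<lambda>x. fW x W) ` ?K" for U
  proof
    fix y assume "y \<in> S U"
    then obtain b where b: "b \<in> A" "y = asl_mult (sel U) b" unfolding S_def by blast
    have "b \<in> B" using AB b by blast
    have "(sel U, b) \<in> ?K \<times> B" using sel[OF that] \<open>b \<in> B\<close> by blast
    then have "asl_mult (fst (sel U, b)) (snd (sel U, b)) \<in> cball z e" using Cb by blast
    then have "y \<in> cball z e" using b by simp
    moreover have "y \<in> H" using subgroupD(2)[OF sg] sel[OF that] b AB B_def by blast
    ultimately show "y \<in> Cs" by (simp add: Cs_def)
  qed
  have Sf: "S U \<in> fmeasurable \<mu>" if "U \<in> (\<lambda>x. fW x W) ` ?K" for U
    using fmeasurableI2[OF CsS SCs[OF that] Ssets[OF that]] .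
  have SZ: "S U \<subseteq> Zs H c U" if "U \<in> (\<lambda>x. fW x W) ` ?K" for U
  proof -
    have "S U \<subseteq> (\<lambda>h. asl_mult (sel U) h) ` Zs H c W" unfolding S_def A_def by auto
    also have "\<dots> = Zs H c U" using Zs_translate[OF sg] sel[OF that] by auto
    finally show ?thesis .
  qed
  have ma: "measure \<mu> A > 0"
    using Apos Afin by (simp add: measure_def enn2real_positive_iff zero_less_iff_neq_zero)
  obtain N :: nat where N: "measure \<mu> Cs < real N * measure \<mu> A"
    using ex_less_of_nat_mult[OF ma] by blast
  obtain BB where BB: "finite BB" "card BB = N" "BB \<subseteq> (\<lambda>x. fW x W) ` ?K"
    using infinite_arbitrarily_large[OF inf] by blast
  have "measure \<mu> (\<Union>U\<in>BB. S U) = (\<Sum>U\<in>BB. measure \<mu> (S U))"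
  proof (rule measure_UNION_AE[OF BB(1)])
    show "\<And>U. U \<in> BB \<Longrightarrow> S U \<in> fmeasurable \<mu>" using Sf BB(3) by blast
    show "pairwise (\<lambda>i j. AE x in \<mu>. x \<notin> S i \<or> x \<notin> S j) BB"
    proof (rule pairwiseI)
      fix U U' assume U: "U \<in> BB" and U': "U' \<in> BB" and ne: "U \<noteq> U'"
      have sU: "sel U \<in> H" "fW (sel U) W = U" using sel BB(3) U by auto
      have sU': "sel U' \<in> H" "fW (sel U') W = U'" using sel BB(3) U' by auto
      have "emeasure \<mu> (Zs H c U \<inter> Zs H c U') = 0"
        using disj[OF sU(1) sU'(1)] sU sU' ne by simp
      moreover have "Zs H c U \<inter> Zs H c U' \<in> sets \<mu>"
        using Zs_sets[OF hm] fW_subspace[OF sW] sU sU' by (metis sets.Int)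
      ultimately have "Zs H c U \<inter> Zs H c U' \<in> null_sets \<mu>" by blast
      moreover have "{x \<in> space \<mu>. \<not> (x \<notin> S U \<or> x \<notin> S U')} \<subseteq> Zs H c U \<inter> Zs H c U'"
        using SZ BB(3) U U' by blast
      ultimately show "AE x in \<mu>. x \<notin> S U \<or> x \<notin> S U'" by (rule AE_I')
    qed
  qed
  also have "\<dots> = real N * measure \<mu> A"
  proof -
    have "\<And>U. U \<in> BB \<Longrightarrow> measure \<mu> (S U) = measure \<mu> A"
      using SU BB(3) by (auto simp: measure_def)
    then show ?thesis using BB(2) by simp
  qed
  finally have eq: "measure \<mu> (\<Union>U\<in>BB. S U) = real N * measure \<mu> A" .
  have "measure \<mu> (\<Union>U\<in>BB. S U) \<le> measure \<mu> Cs"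
  proof (rule measure_mono_fmeasurable[OF _ _ CsS])
    show "(\<Union>U\<in>BB. S U) \<subseteq> Cs" using SCs BB(3) by blast
    show "(\<Union>U\<in>BB. S U) \<in> sets \<mu>" using Ssets BB(1,3) by (intro sets.finite_UN) auto
  qed
  then show False using eq N by simp
qed


lemma loc_const:
  fixes H :: "'n::finite asl set"
  assumes sg: "asl_subgroup H" and cl: "closed H" and sW: "subspace W"
    and fin: "finite ((\<lambda>x. fW x W) ` (H \<inter> cball x0 1))" and x0: "x0 \<in> H"
  shows "\<exists>r>0. \<forall>x\<in>H. dist x x0 < r \<longrightarrow> fW x W = fW x0 W"
proof -
  let ?V = "(\<lambda>x. fW x W) ` (H \<inter> cball x0 1)"
  define F where "F U = H \<inter> (\<Inter>w\<in>W. {x. fst x *v w \<in> U})" for U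
  have clF: "closed (F U)" if UV: "U \<in> ?V" for U
  proof -
    obtain x' where "fW x' W = U" using UV by blast
    then have "subspace U" using fW_subspace[OF sW] by blast
    then have cU: "closed U" by (rule closed_subspace)
    have "closed {x :: 'n asl. fst x *v w \<in> U}" for w
      by (rule closed_Zs_aux[OF cU])
    then show ?thesis unfolding F_def by (intro closed_Int cl closed_INT) simp
  qed
  define G where "G = (\<Union>U\<in>?V - {fW x0 W}. F U)"
  have clG: "closed G" unfolding G_def using fin clF by (intro closed_UN) auto
  have dimeq: "dim (fW x W) = dim W" if "x \<in> H" for x
    using fW_dim[of x W] subgroupD(4)[OF sg that] by simp
  have x0G: "x0 \<notin> G"
  proof
    assume "x0 \<in> G"
    then obtain U where U: "U \<in> ?V" "U \<noteq> fW x0 W" "x0 \<in> F U" unfolding G_def by blast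
    obtain x' where x': "x' \<in> H" "fW x' W = U" using U(1) by blast
    have "fW x0 W \<subseteq> U" using U(3) by (auto simp: F_def fW_def)
    moreover have "dim U \<le> dim (fW x0 W)" using dimeq[OF x0] dimeq[OF x'(1)] x'(2) by simp
    moreover have "subspace U" using fW_subspace[OF sW] x'(2) by blast
    ultimately have "fW x0 W = U"
      using subspace_dim_equal[OF fW_subspace[OF sW]] by blast
    then show False using U(2) by simp
  qed
  have "open (- G)" using clG by (simp add: open_Compl)
  then obtain r where r: "r > 0" "ball x0 r \<subseteq> - G"
    using x0G open_contains_ball by blast
  show ?thesis
  proof (intro exI[of _ "min r 1"] conjI ballI impI)
    show "0 < min r 1" using r by simp
    fix x assume x: "x \<in> H" "dist x x0 < min r 1"
    show "fW x W = fW x0 W"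
    proof (rule ccontr)
      assume ne: "fW x W \<noteq> fW x0 W"
      have "x \<in> H \<inter> cball x0 1" using x by (simp add: dist_commute)
      then have "fW x W \<in> ?V" by blast
      moreover have "x \<in> F (fW x W)" using x by (auto simp: F_def fW_def)
      ultimately have "x \<in> G" using ne unfolding G_def by blast
      moreover have "x \<in> ball x0 r" using x by (simp add: dist_commute)
      ultimately show False using r by blast
    qed
  qed
qed

lemma all_fix:
  fixes H :: "'n::finite asl set"
  assumes sg: "asl_subgroup H" and cn: "connected H"
    and lc: "\<And>x0. x0 \<in> H \<Longrightarrow> \<exists>r>0. \<forall>x\<in>H. dist x x0 < r \<longrightarrow> fW x W = fW x0 W"
  shows "\<forall>x\<in>H. fW x W = W"
proof (rule ccontr)
  assume nt: "\<not> ?thesis"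
  let ?T = "{x \<in> H. fW x W = W}"
  have o1: "openin (top_of_set H) ?T"
    unfolding openin_euclidean_subtopology_iff
  proof (intro conjI ballI)
    fix x assume xT: "x \<in> ?T"
    then obtain r where r: "r > 0" "\<forall>x'\<in>H. dist x' x < r \<longrightarrow> fW x' W = fW x W"
      using lc[of x] by blast
    show "\<exists>e>0. \<forall>x'\<in>H. dist x' x < e \<longrightarrow> x' \<in> ?T"
    proof (intro exI[of _ r] conjI ballI impI)
      show "0 < r" by (rule r(1))
      fix x' assume x': "x' \<in> H" "dist x' x < r"
      then have "fW x' W = fW x W" using r(2) by blast
      then show "x' \<in> ?T" using xT x'(1) by simp
    qed
  qed blast
  have o2: "openin (top_of_set H) (H - ?T)"
    unfolding openin_euclidean_subtopology_iff
  proof (intro conjI ballI)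
    fix x assume xT: "x \<in> H - ?T"
    then obtain r where r: "r > 0" "\<forall>x'\<in>H. dist x' x < r \<longrightarrow> fW x' W = fW x W"
      using lc[of x] by blast
    show "\<exists>e>0. \<forall>x'\<in>H. dist x' x < e \<longrightarrow> x' \<in> H - ?T"
    proof (intro exI[of _ r] conjI ballI impI)
      show "0 < r" by (rule r(1))
      fix x' assume x': "x' \<in> H" "dist x' x < r"
      then have "fW x' W = fW x W" using r(2) by blast
      then show "x' \<in> H - ?T" using xT x'(1) by simp
    qed
  qed blast
  have "asl_one \<in> ?T" using subgroupD(1)[OF sg] fW_one by auto
  have ne1: "?T \<noteq> {}" using \<open>asl_one \<in> ?T\<close> by blast
  have ne2: "H - ?T \<noteq> {}" using nt by blast
  have cov: "H \<subseteq> ?T \<union> (H - ?T)" by blast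
  have dis: "?T \<inter> (H - ?T) = {}" by blast
  have "\<exists>E1 E2. openin (top_of_set H) E1 \<and> openin (top_of_set H) E2 \<and>
                 H \<subseteq> E1 \<union> E2 \<and> E1 \<inter> E2 = {} \<and> E1 \<noteq> {} \<and> E2 \<noteq> {}"
    by (rule exI[of _ ?T], rule exI[of _ "H - ?T"], intro conjI o1 o2 cov dis ne1 ne2)
  then show False using connected_openin[THEN iffD1, OF cn] by (rule notE[rotated])
qed

lemma null_Zs:
  fixes H :: "'n::finite asl set"
  assumes sg: "asl_subgroup H" and cl: "closed H" and cn: "connected H"
    and hm: "haar_measure H \<mu>" and sP: "subspace P" and cP: "c \<notin> P"
  shows "emeasure \<mu> (Zs H c P) = 0"
proof (rule ccontr)
  assume pos: "emeasure \<mu> (Zs H c P) \<noteq> 0"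
  let ?good = "\<lambda>W. subspace W \<and> c \<notin> W \<and> emeasure \<mu> (Zs H c W) \<noteq> 0"
  obtain W where W: "?good W" and minW: "\<And>W'. ?good W' \<Longrightarrow> dim W \<le> dim W'"
  proof -
    have "?good P" using sP cP pos by blast
    from ex_has_least_nat[of ?good, OF this, of dim] show ?thesis using that by blast
  qed
  have sW: "subspace W" and cW: "c \<notin> W" and pW: "emeasure \<mu> (Zs H c W) \<noteq> 0" using W by auto
  have disj: "emeasure \<mu> (Zs H c (fW x W) \<inter> Zs H c (fW y W)) = 0"
    if "x \<in> H" "y \<in> H" "fW x W \<noteq> fW y W" for x y
    by (rule inter_null[OF sg hm sW cW _ that]) (use minW in blast)
  have fixW: "\<forall>x\<in>H. fW x W = W"
  proof (rule all_fix[OF sg cn])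
    fix x0 assume x0: "x0 \<in> H"
    show "\<exists>r>0. \<forall>x\<in>H. dist x x0 < r \<longrightarrow> fW x W = fW x0 W"
      by (rule loc_const[OF sg cl sW finite_translates[OF sg hm cl sW pW disj x0] x0])
  qed
  have "Zs H c W \<noteq> {}" using pW by auto
  then obtain h where h: "h \<in> H" "fst h *v c \<in> W" by (auto simp: Zs_def)
  have hi: "asl_inv h \<in> H" using subgroupD(3)[OF sg h(1)] .
  have dh: "det (fst h) \<noteq> 0" using subgroupD(4)[OF sg h(1)] by simp
  have "matrix_inv (fst h) *v (fst h *v c) \<in> fW (asl_inv h) W"
    using h(2) by (auto simp: fW_def)
  then have "c \<in> W" using fixW hi by (simp add: matrix_vector_mul_assoc minv[OF dh])
  then show False using cW by simp
qed




lemma countable_int_vecs: "countable (int_vecs :: (real^'n::finite) set)"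
proof -
  have "countable (\<int> :: real set)" unfolding Ints_def by simp
  then show ?thesis unfolding int_vecs_def by (rule countable_vector)
qed

lemma vm_comp:
  fixes k :: "real^'n::finite"
  shows "(k v* (A ** M)) $ j = inner k (A *v (M *v axis j 1))"
  by (simp add: cart_eq_inner_axis[of "k v* (A ** M)"] dot_lmul_matrix matrix_vector_mul_assoc)

theorem proposition3p6:
  fixes g :: "('d::finite + 'm::finite) asl" and H :: "('d + 'm) asl set"
  assumes "g \<in> ASL_R"
    and "is_Hg g H"
  shows "(\<forall>h\<in>H. diff_set (lattice_orbit g) \<inter> zero_first
                 \<subseteq> diff_set (lattice_orbit (asl_mult h g)) \<inter> zero_first) \<and>
         (\<forall>\<mu>. haar_measure H \<mu> \<longrightarrow>
            (AE h in \<mu>. diff_set (lattice_orbit g) \<inter> zero_first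
                        = diff_set (lattice_orbit (asl_mult h g)) \<inter> zero_first))"
proof -
  let ?M = "fst g"
  have dM: "det ?M = 1" using assms(1) by (simp add: ASL_R_def)
  have sg: "asl_subgroup H" and cl: "closed H" and cn: "connected H"
    using assms(2) by (auto simp: is_Hg_def)
  have P1: "diff_set (lattice_orbit g) \<inter> zero_first
                 \<subseteq> diff_set (lattice_orbit (asl_mult h g)) \<inter> zero_first" if h: "h \<in> H" for h
  proof
    fix y assume "y \<in> diff_set (lattice_orbit g) \<inter> zero_first"
    then obtain k where k: "k \<in> int_vecs" "y = k v* ?M" "y \<in> zero_first"
      unfolding diff_set_orbit by blast
    obtain k' where "k' \<in> int_vecs" "k' v* (fst h ** ?M) = y"
      using part1[OF assms h k(1)] k by blast
    then show "y \<in> diff_set (lattice_orbit (asl_mult h g)) \<inter> zero_first"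
      unfolding diff_set_orbit using k(3) by auto
  qed
  have P2: "AE h in \<mu>. diff_set (lattice_orbit g) \<inter> zero_first
                        = diff_set (lattice_orbit (asl_mult h g)) \<inter> zero_first"
    if hm: "haar_measure H \<mu>" for \<mu>
  proof -
    define c where "c a = ?M *v axis (Inl a) 1" for a
    have sp: "space \<mu> = H" using space_haar[OF hm] .
    have AEk: "AE h in \<mu>. inner k (fst h *v c a) = 0 \<longrightarrow> inner k (c a) = 0"
      if k: "k \<in> int_vecs" for k a
    proof (cases "inner k (c a) = 0")
      case True then show ?thesis by simp
    next
      case False
      let ?P = "{w. inner k w = 0}"
      have sP: "subspace ?P" by (rule subspace_hyperplane)
      have "emeasure \<mu> (Zs H (c a) ?P) = 0"
        by (rule null_Zs[OF sg cl cn hm sP]) (use False in simp)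
      then have "Zs H (c a) ?P \<in> null_sets \<mu>" using Zs_sets[OF hm sP] by blast
      moreover have "{h \<in> space \<mu>. \<not> (inner k (fst h *v c a) = 0 \<longrightarrow> inner k (c a) = 0)}
          \<subseteq> Zs H (c a) ?P"
        using sp by (auto simp: Zs_def)
      ultimately show ?thesis by (rule AE_I')
    qed
    have "AE h in \<mu>. \<forall>k\<in>int_vecs. \<forall>a\<in>UNIV. inner k (fst h *v c a) = 0 \<longrightarrow> inner k (c a) = 0"
    proof (subst AE_ball_countable[OF countable_int_vecs], intro ballI)
      fix k :: "real^('d+'m)" assume k: "k \<in> int_vecs"
      show "AE h in \<mu>. \<forall>a\<in>UNIV. inner k (fst h *v c a) = 0 \<longrightarrow> inner k (c a) = 0"
        by (subst AE_ball_countable[OF countable_finite[OF finite_class.finite_UNIV]], intro ballI AEk[OF k])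
    qed
    moreover have "AE h in \<mu>. h \<in> space \<mu>" by (rule AE_space)
    ultimately have "AE h in \<mu>. (\<forall>k\<in>int_vecs. \<forall>a\<in>UNIV. inner k (fst h *v c a) = 0 \<longrightarrow> inner k (c a) = 0) \<and>
          h \<in> space \<mu>" by (rule AE_conjI)
    then show ?thesis
    proof (rule eventually_mono)
      fix h assume "(\<forall>k\<in>int_vecs. \<forall>a\<in>UNIV. inner k (fst h *v c a) = 0 \<longrightarrow> inner k (c a) = 0) \<and>
          h \<in> space \<mu>"
      then have Q: "\<And>k a. k \<in> int_vecs \<Longrightarrow> inner k (fst h *v c a) = 0 \<Longrightarrow> inner k (c a) = 0"
        and hH: "h \<in> H" using sp by auto
      show "diff_set (lattice_orbit g) \<inter> zero_first
                        = diff_set (lattice_orbit (asl_mult h g)) \<inter> zero_first"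
      proof
        show "diff_set (lattice_orbit g) \<inter> zero_first
                        \<subseteq> diff_set (lattice_orbit (asl_mult h g)) \<inter> zero_first"
          by (rule P1[OF hH])
        show "diff_set (lattice_orbit (asl_mult h g)) \<inter> zero_first
                        \<subseteq> diff_set (lattice_orbit g) \<inter> zero_first"
        proof
          fix y assume "y \<in> diff_set (lattice_orbit (asl_mult h g)) \<inter> zero_first"
          then obtain k where k: "k \<in> int_vecs" "y = k v* (fst h ** ?M)" "y \<in> zero_first"
            unfolding diff_set_orbit by auto
          have "(k v* ?M) $ Inl a = 0" for a
          proof -
            have "y $ Inl a = 0" using k(3) by (simp add: zero_first_def)
            then have "inner k (fst h *v c a) = 0" using vm_comp[of k "fst h" ?M] k(2) by (simp add: c_def)
            then have "inner k (c a) = 0" by (rule Q[OF k(1)])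
            then show ?thesis using vm_comp[of k "mat 1" ?M] by (simp add: c_def)
          qed
          then have kz: "k v* ?M \<in> zero_first" by (simp add: zero_first_def)
          have hi: "asl_inv h \<in> H" using subgroupD(3)[OF sg hH] .
          have dh: "det (fst h) \<noteq> 0" using subgroupD(4)[OF sg hH] by simp
          obtain k' where k': "k' \<in> int_vecs" "k' v* (matrix_inv (fst h) ** ?M) = k v* ?M"
            using part1[OF assms hi k(1) kz] by auto
          have "k' v* matrix_inv (fst h) = k"
          proof -
            have "(k' v* (matrix_inv (fst h) ** ?M)) v* matrix_inv ?M = (k v* ?M) v* matrix_inv ?M"
              using k'(2) by simp
            then show ?thesis
              by (simp add: vector_matrix_mul_assoc matrix_mul_assoc[symmetric] minv dM)
          qed
          then have "k v* fst h = k'"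
            by (metis vector_matrix_mul_assoc minv(2)[OF dh] vector_matrix_mul_rid)
          then have "k v* fst h \<in> int_vecs" using k'(1) by simp
          moreover have "y = (k v* fst h) v* ?M" using k(2) by (simp add: vector_matrix_mul_assoc)
          ultimately show "y \<in> diff_set (lattice_orbit g) \<inter> zero_first"
            unfolding diff_set_orbit using k(3) by blast
        qed
      qed
    qed
  qed
  show ?thesis using P1 P2 by blast
qed


end
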